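(* Suppose Assumptions A1–A3 hold. Let $\bm{X}_t=\{\bm{x}_1,\dots,\bm{x}_t\}$ be generated by density-based exploration, $\bm{x}_{t+1}\in\arg\min_{\bm{x}\in\mathcal{X}}W_t(\bm{x})$ (equivalently $\arg\max\hat\sigma_t$), where $W_t$ uses bandwidth $\ell_t$ at iteration $t$. Then (i) if $\ell_t\equiv\ell$ is fixed, $\inf_t h_{\mathcal{X},\bm{X}_t}\le R_\Psi\ell$; (ii) there exists a bandwidth sequence $\ell_t\to0$ such that $\inf_t h_{\mathcal{X},\bm{X}_t}=0$.
   Context: A1: $\mathcal{X}\subset\mathbb{R}^d$ compact, convex, nonempty interior. A2: $f$ continuous (not used in the selection rule). A3: kernel $k(\bm{x},\bm{x}')=\Psi((\bm{x}-\bm{x}')/\ell)$ with bandwidth $\ell>0$, where $\Psi:\mathbb{R}^d\to[0,\infty)$ has support contained in $B(\bm{0},R_\Psi)$, is continuous at $\bm{0}$, $\Psi(\bm{0})>0$, $\sup\Psi\le M_\Psi$. $W_t(\bm{x})=\sum_{i=1}^tk(\bm{x},\bm{x}_i)$, $\hat\sigma_t=W_t^{-1/2}$ with $c/0=\infty$. Fill distance $h_{\mathcal{X},\bm{X}_t}=\sup_{\bm{x}\in\mathcal{X}}\min_{i\le t}\|\bm{x}-\bm{x}_i\|$. *)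

theory Defs
  imports "HOL-Analysis.Analysis"
begin

definition kernel_density ::
  "('a::real_normed_vector \<Rightarrow> real) \<Rightarrow> real \<Rightarrow> (nat \<Rightarrow> 'a) \<Rightarrow> nat \<Rightarrow> 'a \<Rightarrow> real" where
  "kernel_density \<Psi> l P t y = (\<Sum>i=1..t. \<Psi> ((1 / l) *\<^sub>R (y - P i)))"

definition fill_distance :: "'a::metric_space set \<Rightarrow> 'a set \<Rightarrow> real" where
  "fill_distance S A = (SUP x\<in>S. INF a\<in>A. dist x a)"

definition dbe_run ::
  "'a::real_normed_vector set \<Rightarrow> ('a \<Rightarrow> real) \<Rightarrow> (nat \<Rightarrow> real) \<Rightarrow> (nat \<Rightarrow> 'a) \<Rightarrow> bool" where
  "dbe_run S \<Psi> ls P \<longleftrightarrow> P 1 \<in> S \<and>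
     (\<forall>t\<ge>1. P (Suc t) \<in> S \<and>
        (\<forall>y\<in>S. kernel_density \<Psi> (ls t) P t (P (Suc t)) \<le> kernel_density \<Psi> (ls t) P t y))"

end

theory Submission imports Defs begin

lemma packing:
  fixes S :: "'a::metric_space set"
  assumes "compact S" "d > 0"
  shows "\<exists>N::nat. \<forall>f. (\<forall>i\<le>N. f i \<in> S) \<longrightarrow> (\<exists>i j. i < j \<and> j \<le> N \<and> dist (f i) (f j) < d)"
proof -
  have "S \<subseteq> (\<Union>c\<in>S. ball c (d/2))" using assms(2) by auto
  then obtain C where C: "C \<subseteq> S" "finite C" "S \<subseteq> (\<Union>c\<in>C. ball c (d/2))"
    using compactE_image[OF assms(1), of S "\<lambda>c. ball c (d/2)"] by auto
  have "\<forall>f. (\<forall>i\<le>card C. f i \<in> S) \<longrightarrow> (\<exists>i j. i < j \<and> j \<le> card C \<and> dist (f i) (f j) < d)"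
  proof (intro allI impI)
    fix f assume f: "\<forall>i\<le>card C. f i \<in> S"
    define g where "g i = (SOME c. c \<in> C \<and> dist c (f i) < d/2)" for i
    have g: "g i \<in> C \<and> dist (g i) (f i) < d/2" if "i \<le> card C" for i
    proof -
      have "f i \<in> S" using f that by auto
      then obtain c where "c \<in> C" "f i \<in> ball c (d/2)" using C(3) by blast
      then have "\<exists>c. c \<in> C \<and> dist c (f i) < d/2" by auto
      then show ?thesis unfolding g_def by (rule someI_ex)
    qed
    have "\<not> inj_on g {0..card C}"
    proof
      assume "inj_on g {0..card C}"
      moreover have "g ` {0..card C} \<subseteq> C" using g by auto
      ultimately have "card {0..card C} \<le> card C" using card_inj_on_le C(2) by blast
      then show False by simp
    qed
    then obtain i j where ij: "i \<le> card C" "j \<le> card C" "i \<noteq> j" "g i = g j"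
      unfolding inj_on_def by auto
    have "dist (f i) (f j) < d"
    proof -
      have "dist (f i) (f j) \<le> dist (f i) (g i) + dist (g j) (f j)"
        using ij(4) dist_triangle by (metis)
      also have "\<dots> < d" using g[OF ij(1)] g[OF ij(2)] by (simp add: dist_commute)
      finally show ?thesis .
    qed
    then show "\<exists>i j. i < j \<and> j \<le> card C \<and> dist (f i) (f j) < d"
      using ij by (metis dist_commute nat_neq_iff)
  qed
  then show ?thesis by blast
qed

lemma fill_nonneg:
  fixes S :: "'a::metric_space set"
  assumes "compact S" "S \<noteq> {}" "finite A" "A \<noteq> {}"
  shows "0 \<le> fill_distance S A"
proof -
  obtain x where x: "x \<in> S" using assms by auto
  obtain a0 where a0: "a0 \<in> A" using assms by auto
  have "bounded S" using assms(1) compact_imp_bounded by auto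
  then obtain B where B: "\<forall>y\<in>S. dist a0 y \<le> B" using bounded_any_center by metis
  have "bdd_above ((\<lambda>y. INF a\<in>A. dist y a) ` S)"
  proof (rule bdd_aboveI2)
    fix y assume "y \<in> S"
    have "(INF a\<in>A. dist y a) \<le> dist y a0"
      using a0 assms(3) by (intro cINF_lower) auto
    also have "\<dots> \<le> B" using B \<open>y\<in>S\<close> by (metis dist_commute)
    finally show "(INF a\<in>A. dist y a) \<le> B" .
  qed
  moreover have "0 \<le> (INF a\<in>A. dist x a)"
    using assms(4) by (intro cINF_greatest) auto
  ultimately show ?thesis unfolding fill_distance_def
    using x by (meson cSUP_upper order_trans)
qed

lemma fill_gt:
  fixes S :: "'a::metric_space set"
  assumes "S \<noteq> {}" "finite A" "\<not> fill_distance S A \<le> c"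
  shows "\<exists>x\<in>S. \<forall>a\<in>A. dist x a > c"
proof (rule ccontr)
  assume "\<not> ?thesis"
  then have h: "\<forall>x\<in>S. \<exists>a\<in>A. dist x a \<le> c" by (auto simp: not_less)
  have "(INF a\<in>A. dist x a) \<le> c" if xS: "x \<in> S" for x
  proof -
    obtain a where "a \<in> A" "dist x a \<le> c" using h xS by meson
    moreover have "(INF a\<in>A. dist x a) \<le> dist x a" using \<open>a\<in>A\<close> assms(2) by (intro cINF_lower) auto
    ultimately show ?thesis by linarith
  qed
  then have "fill_distance S A \<le> c" unfolding fill_distance_def using assms(1) by (intro cSUP_least) auto
  then show False using assms(3) by simp
qed

lemma norm_scale_dist:
  fixes x y :: "'a::real_normed_vector"
  assumes "l > 0"
  shows "norm ((1/l) *\<^sub>R (x - y)) = dist x y / l"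
  using assms by (simp add: dist_norm)

lemma sep_step:
  fixes S :: "'a::real_normed_vector set"
  assumes run: "dbe_run S \<Psi> ls P" and t: "t \<ge> 1" and l: "ls t > 0" and Rc: "R * ls t \<le> c"
    and nonneg: "\<forall>z. \<Psi> z \<ge> 0" and supp: "closure {z. \<Psi> z \<noteq> 0} \<subseteq> ball 0 R"
    and del: "\<forall>z. norm z < \<delta> \<longrightarrow> \<Psi> z > 0"
    and nf: "\<not> fill_distance S (P ` {1..t}) \<le> c"
    and i: "i \<in> {1..t}"
  shows "dist (P (Suc t)) (P i) \<ge> \<delta> * ls t"
proof -
  have Sne: "S \<noteq> {}" using run unfolding dbe_run_def by auto
  obtain x where x: "x \<in> S" "\<forall>a\<in>P`{1..t}. dist x a > c"
    using fill_gt[OF Sne _ nf] by auto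
  have z: "\<Psi> ((1/ls t) *\<^sub>R (x - P j)) = 0" if j: "j \<in> {1..t}" for j
  proof -
    have "dist x (P j) > c" using x j by auto
    have "R \<le> c / ls t" using Rc l by (simp add: field_simps)
    also have "c / ls t < dist x (P j) / ls t" using l \<open>dist x (P j) > c\<close> by (simp add: divide_strict_right_mono)
    finally have "norm ((1/ls t) *\<^sub>R (x - P j)) > R" using norm_scale_dist[OF l, of x "P j"] by linarith
    then have "(1/ls t) *\<^sub>R (x - P j) \<notin> ball 0 R" unfolding mem_ball_0 by linarith
    then have "(1/ls t) *\<^sub>R (x - P j) \<notin> closure {z. \<Psi> z \<noteq> 0}" using supp by blast
    then show ?thesis using closure_subset[of "{z. \<Psi> z \<noteq> 0}"] by blast
  qed
  have "kernel_density \<Psi> (ls t) P t x = 0" unfolding kernel_density_def using z by simp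
  moreover have "\<forall>y\<in>S. kernel_density \<Psi> (ls t) P t (P (Suc t)) \<le> kernel_density \<Psi> (ls t) P t y"
    using run t unfolding dbe_run_def by blast
  ultimately have "kernel_density \<Psi> (ls t) P t (P (Suc t)) \<le> 0" using x(1) by metis
  moreover have "kernel_density \<Psi> (ls t) P t (P (Suc t)) \<ge> 0" unfolding kernel_density_def
    using nonneg by (simp add: sum_nonneg)
  ultimately have "(\<Sum>j=1..t. \<Psi> ((1/ls t) *\<^sub>R (P (Suc t) - P j))) = 0"
    unfolding kernel_density_def by linarith
  then have "\<Psi> ((1/ls t) *\<^sub>R (P (Suc t) - P i)) = 0"
    using i sum_nonneg_eq_0_iff[OF finite_atLeastAtMost, of 1 t "\<lambda>j. \<Psi> ((1/ls t) *\<^sub>R (P (Suc t) - P j))"] nonneg by blast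
  then have "\<not> norm ((1/ls t) *\<^sub>R (P (Suc t) - P i)) < \<delta>" using del by (metis less_irrefl)
  then have "\<delta> \<le> dist (P (Suc t)) (P i) / ls t" using norm_scale_dist[OF l, of "P (Suc t)" "P i"] by linarith
  then show ?thesis using l by (simp add: field_simps)
qed

lemma run_in:
  assumes "dbe_run S \<Psi> ls P" "n \<ge> 1"
  shows "P n \<in> S"
proof (cases "n = 1")
  case True then show ?thesis using assms unfolding dbe_run_def by auto
next
  case False
  then have "n = Suc (n - 1)" "n - 1 \<ge> 1" using assms(2) by auto
  then show ?thesis using assms(1) unfolding dbe_run_def by metis
qed

lemma window:
  fixes S :: "'a::real_normed_vector set"
  assumes run: "dbe_run S \<Psi> ls P"
    and nonneg: "\<forall>z. \<Psi> z \<ge> 0" and supp: "closure {z. \<Psi> z \<noteq> 0} \<subseteq> ball 0 R"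
    and del: "\<forall>z. norm z < \<delta> \<longrightarrow> \<Psi> z > 0"
    and l: "l > 0"
    and pack: "\<forall>f. (\<forall>i\<le>N. f i \<in> S) \<longrightarrow> (\<exists>i j. i < j \<and> j \<le> N \<and> dist (f i) (f j) < \<delta> * l)"
    and win: "\<forall>t. a \<le> t \<and> t \<le> a + N \<longrightarrow> ls t = l" and a: "a \<ge> 1" and Rc: "R * l \<le> c"
  shows "\<exists>t\<ge>1. fill_distance S (P ` {1..t}) \<le> c"
proof (rule ccontr)
  assume H: "\<not> ?thesis"
  have "\<forall>i\<le>N. P (a + i) \<in> S" using run_in[OF run] a by auto
  then obtain i j where ij: "i < j" "j \<le> N" "dist (P (a + i)) (P (a + j)) < \<delta> * l"
    using pack[rule_format, of "\<lambda>i. P (a + i)"] by blast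
  define t where "t = a + j - 1"
  have t1: "t \<ge> 1" and st: "Suc t = a + j" and tw: "a \<le> t" "t \<le> a + N" using ij a unfolding t_def by auto
  then have lt: "ls t = l" using win by auto
  have "dist (P (Suc t)) (P (a + i)) \<ge> \<delta> * ls t"
  proof (rule sep_step[OF run t1 _ _ nonneg supp del])
    show "0 < ls t" using l lt by simp
    show "R * ls t \<le> c" using Rc lt by simp
    show "\<not> fill_distance S (P ` {1..t}) \<le> c" using H t1 by blast
    show "a + i \<in> {1..t}" using ij a st by simp
  qed
  then show False using ij(3) st lt by (simp add: dist_commute)
qed

lemma inf_le:
  fixes S :: "'a::metric_space set" and P :: "nat \<Rightarrow> 'a"
  assumes "compact S" "S \<noteq> {}" "\<exists>t\<ge>1. fill_distance S (P ` {1..t}) \<le> c"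
  shows "(INF t\<in>{1..}. fill_distance S (P ` {1..t})) \<le> c"
proof -
  obtain t where t: "t \<ge> 1" "fill_distance S (P ` {1..t}) \<le> c" using assms(3) by auto
  have "bdd_below ((\<lambda>t. fill_distance S (P ` {1..t})) ` {1..})"
    by (rule bdd_belowI2[where m=0]) (auto intro!: fill_nonneg[OF assms(1,2)])
  then show ?thesis using t by (intro cINF_lower2[where x=t]) auto
qed

theorem mainTheorem6:
  fixes S :: "'a::euclidean_space set"
    and \<Psi> :: "'a \<Rightarrow> real"
    and R M :: real
  assumes "compact S" and "convex S" and "interior S \<noteq> {}"
    and "\<forall>z. \<Psi> z \<ge> 0"
    and "closure {z. \<Psi> z \<noteq> 0} \<subseteq> ball 0 R"
    and "isCont \<Psi> 0" and "\<Psi> 0 > 0"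
    and "\<forall>z. \<Psi> z \<le> M"
  shows "(\<forall>l>0. \<forall>P. dbe_run S \<Psi> (\<lambda>_. l) P \<longrightarrow>
             (INF t\<in>{1..}. fill_distance S (P ` {1..t})) \<le> R * l)
       \<and> (\<exists>ls. (\<forall>t. ls t > 0) \<and> ls \<longlonglongrightarrow> 0 \<and>
             (\<forall>P. dbe_run S \<Psi> ls P \<longrightarrow>
                (INF t\<in>{1..}. fill_distance S (P ` {1..t})) = 0))"
proof -
  note cpt = assms(1) and nonneg = assms(4) and supp = assms(5)
  have Sne: "S \<noteq> {}" using assms(3) interior_subset by blast
  have "(0::'a) \<in> closure {z. \<Psi> z \<noteq> 0}" using assms(7) closure_subset by fastforce
  then have R0: "R > 0" using supp by auto
  obtain \<delta> where d0: "\<delta> > 0" and del: "\<forall>z. norm z < \<delta> \<longrightarrow> \<Psi> z > 0"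
  proof -
    have "\<Psi> \<midarrow>0\<rightarrow> \<Psi> 0" using assms(6) isCont_def by blast
    from LIM_D[OF this assms(7)] obtain s where s: "s > 0"
      "\<forall>x. x \<noteq> 0 \<and> norm (x - 0) < s \<longrightarrow> norm (\<Psi> x - \<Psi> 0) < \<Psi> 0" by blast
    have "\<forall>z. norm z < s \<longrightarrow> \<Psi> z > 0"
    proof (intro allI impI)
      fix z :: 'a assume "norm z < s"
      show "\<Psi> z > 0"
      proof (cases "z = 0")
        case True then show ?thesis using assms(7) by simp
      next
        case False then have "norm (\<Psi> z - \<Psi> 0) < \<Psi> 0" using s \<open>norm z < s\<close> by auto
        then show ?thesis by auto
      qed
    qed
    then show ?thesis using that s(1) by blast
  qed
  have part1: "\<forall>l>0. \<forall>P. dbe_run S \<Psi> (\<lambda>_. l) P \<longrightarrow>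
             (INF t\<in>{1..}. fill_distance S (P ` {1..t})) \<le> R * l"
  proof (intro allI impI)
    fix l :: real and P assume l: "l > 0" and run: "dbe_run S \<Psi> (\<lambda>_. l) P"
    have "\<delta> * l > 0" using d0 l by simp
    from packing[OF cpt this] obtain N :: nat where pack: "\<forall>f. (\<forall>i\<le>N. f i \<in> S) \<longrightarrow> (\<exists>i j. i < j \<and> j \<le> N \<and> dist (f i) (f j) < \<delta> * l)"
      ..
    have "\<exists>t\<ge>1. fill_distance S (P ` {1..t}) \<le> R * l"
      by (rule window[OF run nonneg supp del l pack, of 1]) auto
    then show "(INF t\<in>{1..}. fill_distance S (P ` {1..t})) \<le> R * l"
      by (rule inf_le[OF cpt Sne])
  qed
  define N where "N k = (SOME N::nat. \<forall>f. (\<forall>i\<le>N. f i \<in> S) \<longrightarrow>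
      (\<exists>i j. i < j \<and> j \<le> N \<and> dist (f i) (f j) < \<delta> * (1 / real (Suc k))))" for k
  have packN: "\<forall>f. (\<forall>i\<le>N k. f i \<in> S) \<longrightarrow>
      (\<exists>i j. i < j \<and> j \<le> N k \<and> dist (f i) (f j) < \<delta> * (1 / real (Suc k)))" for k
    unfolding N_def by (rule someI_ex) (rule packing[OF cpt], simp add: d0)
  define T where "T = rec_nat (1::nat) (\<lambda>k x. x + N k + 1)"
  have T0: "T 0 = 1" and TS: "T (Suc k) = T k + N k + 1" for k unfolding T_def by simp_all
  have Tmono: "T i \<le> T j" if "i \<le> j" for i j
    using that by (induction rule: dec_induct) (auto simp: TS)
  have Tge: "T k \<ge> k + 1" for k by (induction k) (auto simp: T0 TS)
  define g where "g t = (LEAST k. t < T (Suc k))" for t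
  have gex: "t < T (Suc (g t))" for t
    unfolding g_def by (rule LeastI[of _ t]) (use Tge[of "Suc t"] in simp)
  have gle: "g t \<le> k" if "t < T (Suc k)" for t k
    unfolding g_def using that by (rule Least_le)
  have gge: "k \<le> g t" if "T k \<le> t" for t k
  proof (rule ccontr)
    assume "\<not> k \<le> g t"
    then have "Suc (g t) \<le> k" by simp
    then have "T (Suc (g t)) \<le> T k" by (rule Tmono)
    then show False using gex[of t] that by simp
  qed
  define ls where "ls t = 1 / real (Suc (g t))" for t
  have lspos: "\<forall>t. ls t > 0" unfolding ls_def by simp
  have lslim: "ls \<longlonglongrightarrow> 0"
  proof (rule LIMSEQ_I)
    fix r :: real assume "r > 0"
    then obtain k where k: "inverse (real (Suc k)) < r" using reals_Archimedean by blast
    have "norm (ls t - 0) < r" if "t \<ge> T k" for t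
    proof -
      have "k \<le> g t" using gge that by simp
      then have "ls t \<le> 1 / real (Suc k)" unfolding ls_def by (simp add: frac_le)
      moreover have "1 / real (Suc k) < r" using k by (simp add: inverse_eq_divide)
      ultimately have "ls t < r" by linarith
      then show ?thesis using lspos[rule_format, of t] by simp
    qed
    then show "\<exists>no. \<forall>n\<ge>no. norm (ls n - 0) < r" by blast
  qed
  have part2: "\<forall>P. dbe_run S \<Psi> ls P \<longrightarrow> (INF t\<in>{1..}. fill_distance S (P ` {1..t})) = 0"
  proof (intro allI impI)
    fix P assume run: "dbe_run S \<Psi> ls P"
    have le: "(INF t\<in>{1..}. fill_distance S (P ` {1..t})) \<le> c" if c: "c > 0" for c
    proof -
      obtain k where k: "inverse (real (Suc k)) < c / R" using reals_Archimedean c R0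
        by (metis divide_pos_pos)
      have Rc: "R * (1 / real (Suc k)) \<le> c" using k R0 by (simp add: field_simps)
      have win: "\<forall>t. T k \<le> t \<and> t \<le> T k + N k \<longrightarrow> ls t = 1 / real (Suc k)"
      proof (intro allI impI)
        fix t assume t: "T k \<le> t \<and> t \<le> T k + N k"
        have "g t = k" using gge[of k t] gle[of t k] t TS[of k] by simp
        then show "ls t = 1 / real (Suc k)" unfolding ls_def by simp
      qed
      have "\<exists>t\<ge>1. fill_distance S (P ` {1..t}) \<le> c"
        by (rule window[OF run nonneg supp del _ packN win _ Rc]) (use Tge[of k] in auto)
      then show ?thesis by (rule inf_le[OF cpt Sne])
    qed
    have ge: "0 \<le> (INF t\<in>{1..}. fill_distance S (P ` {1..t}))"
      by (rule cINF_greatest) (auto intro!: fill_nonneg[OF cpt Sne])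
    show "(INF t\<in>{1..}. fill_distance S (P ` {1..t})) = 0"
    proof (rule ccontr)
      assume "(INF t\<in>{1..}. fill_distance S (P ` {1..t})) \<noteq> 0"
      then have "(INF t\<in>{1..}. fill_distance S (P ` {1..t})) > 0" using ge by simp
      from le[OF half_gt_zero[OF this]] this show False by simp
    qed
  qed
  show ?thesis using part1 part2 lspos lslim by blast
qed

end
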